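(* Let $K\ge 1$ and $N>K$ be integers and $\mu>0$. Consider $K$ files $f_1,\dots,f_K$ stored on $N$ nodes using a systematic $(N,K)$ MDS code, each node having service rate $\mu$. Then every vector $(\lambda_1,\dots,\lambda_K)$ in the service capacity region of this system satisfies $$\sum_{i=1}^{K}\Big(\min(\lambda_i,\mu)+K(\lambda_i-\mu)^{+}\Big)\le N\mu,$$ where $(x)^+=\max(0,x)$.
   Context: Storage model: there are $K$ files $f_1,\dots,f_K$ of equal size stored on $N$ nodes labeled $1,\dots,N$, each node having service rate $\mu$. In the systematic $(N,K)$ MDS code, node $i$ stores $f_i$ for $1\le i\le K$, and nodes $K+1,\dots,N$ store parity symbols, such that file $f_i$ can be recovered either from node $i$ alone or from any $K$ of the other $N-1$ nodes. Accordingly, the recovering sets of $f_i$ are $\{i\}$ together with every $K$-element subset of $\{1,\dots,N\}\setminus\{i\}$; denote them $R^{(i)}_1,\dots,R^{(i)}_{t_i}$. Requests for $f_i$ arrive at rate $\lambda_i\ge 0$. The service capacity region is the set of vectors $(\lambda_1,\dots,\lambda_K)$ for which there exist numbers $\lambda^{(i)}_j\ge 0$ ($1\le i\le K$, $1\le j\le t_i$; the rate of requests for $f_i$ assigned to recovering set $R^{(i)}_j$) with $\sum_{j=1}^{t_i}\lambda^{(i)}_j=\lambda_i$ for every $i$, and $\sum_{i=1}^K\sum_{j:\,\ell\in R^{(i)}_j}\lambda^{(i)}_j\le\mu$ for every node $\ell\in\{1,\dots,N\}$. *)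

theory Defs
  imports Complex_Main
begin

definition recovering_sets :: "nat \<Rightarrow> nat \<Rightarrow> nat \<Rightarrow> nat set set" where
  "recovering_sets N K i = insert {i} {S. S \<subseteq> {1..N} - {i} \<and> card S = K}"

text \<open>Service capacity region: lam i is the request rate for file i (1 \<le> i \<le> K);
  a i R is the rate of requests for file i assigned to recovering set R.\<close>
definition in_service_capacity_region ::
  "nat \<Rightarrow> nat \<Rightarrow> real \<Rightarrow> (nat \<Rightarrow> real) \<Rightarrow> bool" where
  "in_service_capacity_region N K mu lam \<longleftrightarrow>
     (\<exists>a :: nat \<Rightarrow> nat set \<Rightarrow> real.
        (\<forall>i\<in>{1..K}. \<forall>R\<in>recovering_sets N K i. a i R \<ge> 0) \<and>
        (\<forall>i\<in>{1..K}. (\<Sum>R\<in>recovering_sets N K i. a i R) = lam i) \<and>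
        (\<forall>l\<in>{1..N}. (\<Sum>i\<in>{1..K}. \<Sum>R\<in>{R\<in>recovering_sets N K i. l \<in> R}. a i R) \<le> mu))"

end

theory Submission
  imports Defs
begin

lemma fin_rs: "finite (recovering_sets N K i)"
proof -
  have "recovering_sets N K i \<subseteq> insert {i} (Pow {1..N})"
    unfolding recovering_sets_def by auto
  thus ?thesis by (rule finite_subset) auto
qed

theorem theorem1:
  fixes N K :: nat and mu :: real and lam :: "nat \<Rightarrow> real"
  assumes "K \<ge> 1" and "N > K" and "mu > 0"
    and "in_service_capacity_region N K mu lam"
  shows "(\<Sum>i\<in>{1..K}. min (lam i) mu + real K * max 0 (lam i - mu)) \<le> real N * mu"
proof -
  obtain a where nn: "\<forall>i\<in>{1..K}. \<forall>R\<in>recovering_sets N K i. a i R \<ge> 0"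
    and sl: "\<forall>i\<in>{1..K}. (\<Sum>R\<in>recovering_sets N K i. a i R) = lam i"
    and ld: "\<forall>l\<in>{1..N}. (\<Sum>i\<in>{1..K}. \<Sum>R\<in>{R\<in>recovering_sets N K i. l \<in> R}. a i R) \<le> mu"
    using assms(4) unfolding in_service_capacity_region_def by blast
  define P where "P i = {S. S \<subseteq> {1..N} - {i} \<and> card S = K}" for i
  have rs: "recovering_sets N K i = insert {i} (P i)" for i
    unfolding recovering_sets_def P_def ..
  have finP: "finite (P i)" for i using fin_rs[of N K i] rs by simp
  have notin: "{i} \<notin> P i" for i unfolding P_def by auto
  have sub: "R \<subseteq> {1..N}" if "i \<in> {1..K}" "R \<in> recovering_sets N K i" for i R
    using that assms(2) unfolding rs P_def by auto
  define T where "T = (\<Sum>l\<in>{1..N}. \<Sum>i\<in>{1..K}. \<Sum>R\<in>{R\<in>recovering_sets N K i. l \<in> R}. a i R)"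
  have "T \<le> (\<Sum>l\<in>{1..N}. mu)" unfolding T_def by (rule sum_mono) (use ld in auto)
  hence T1: "T \<le> real N * mu" by simp
  have "T = (\<Sum>l\<in>{1..N}. \<Sum>i\<in>{1..K}. \<Sum>R\<in>recovering_sets N K i. if l \<in> R then a i R else 0)"
    unfolding T_def by (simp add: sum.inter_filter[OF fin_rs])
  also have "\<dots> = (\<Sum>i\<in>{1..K}. \<Sum>R\<in>recovering_sets N K i. \<Sum>l\<in>{1..N}. if l \<in> R then a i R else 0)"
    apply (subst sum.swap)
    apply (rule sum.cong[OF refl])
    apply (subst sum.swap)
    apply (rule refl)
    done
  also have "\<dots> = (\<Sum>i\<in>{1..K}. \<Sum>R\<in>recovering_sets N K i. a i R * real (card R))"
  proof (rule sum.cong[OF refl], rule sum.cong[OF refl])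
    fix i R assume i: "i \<in> {1..K}" and R: "R \<in> recovering_sets N K i"
    have "(\<Sum>l\<in>{1..N}. if l \<in> R then a i R else 0) = (\<Sum>l\<in>{1..N} \<inter> R. a i R)"
      by (simp add: sum.inter_filter[symmetric] Int_def conj_commute)
    also have "{1..N} \<inter> R = R" using sub[OF i R] by auto
    finally show "(\<Sum>l\<in>{1..N}. if l \<in> R then a i R else 0) = a i R * real (card R)" by simp
  qed
  also have "\<dots> = (\<Sum>i\<in>{1..K}. a i {i} + real K * (lam i - a i {i}))"
  proof (rule sum.cong[OF refl])
    fix i assume i: "i \<in> {1..K}"
    have "(\<Sum>R\<in>recovering_sets N K i. a i R * real (card R))
        = a i {i} + (\<Sum>R\<in>P i. a i R * real (card R))"
      unfolding rs by (simp add: sum.insert[OF finP notin])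
    also have "(\<Sum>R\<in>P i. a i R * real (card R)) = real K * (\<Sum>R\<in>P i. a i R)"
      by (simp add: sum_distrib_left P_def mult.commute)
    also have "(\<Sum>R\<in>P i. a i R) = lam i - a i {i}"
    proof -
      have "a i {i} + (\<Sum>R\<in>P i. a i R) = lam i"
        using sl i unfolding rs by (simp add: sum.insert[OF finP notin])
      thus ?thesis by linarith
    qed
    finally show "(\<Sum>R\<in>recovering_sets N K i. a i R * real (card R)) = a i {i} + real K * (lam i - a i {i})" .
  qed
  finally have T2: "T = (\<Sum>i\<in>{1..K}. a i {i} + real K * (lam i - a i {i}))" .
  have "(\<Sum>i\<in>{1..K}. min (lam i) mu + real K * max 0 (lam i - mu))
        \<le> (\<Sum>i\<in>{1..K}. a i {i} + real K * (lam i - a i {i}))"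
  proof (rule sum_mono)
    fix i assume i: "i \<in> {1..K}"
    have a0: "a i {i} \<ge> 0" using nn i unfolding rs by auto
    have p0: "(\<Sum>R\<in>P i. a i R) \<ge> 0" by (rule sum_nonneg) (use nn i rs in auto)
    have "lam i = a i {i} + (\<Sum>R\<in>P i. a i R)"
      using sl i unfolding rs by (simp add: sum.insert[OF finP notin])
    hence al: "a i {i} \<le> lam i" using p0 by simp
    have il: "i \<in> {1..N}" using i assms(2) by auto
    have "a i {i} \<le> (\<Sum>R\<in>{R\<in>recovering_sets N K i. i \<in> R}. a i R)"
      by (rule member_le_sum) (use nn i fin_rs[of N K i] in \<open>auto simp: rs\<close>)
    also have "\<dots> \<le> (\<Sum>j\<in>{1..K}. \<Sum>R\<in>{R\<in>recovering_sets N K j. i \<in> R}. a j R)"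
      by (rule member_le_sum[OF i, where f="\<lambda>j. \<Sum>R\<in>{R\<in>recovering_sets N K j. i \<in> R}. a j R"])
         (auto intro!: sum_nonneg simp: nn)
    also have "\<dots> \<le> mu" using ld il by auto
    finally have am: "a i {i} \<le> mu" .
    have K1: "real K \<ge> 1" using assms(1) by simp
    show "min (lam i) mu + real K * max 0 (lam i - mu) \<le> a i {i} + real K * (lam i - a i {i})"
    proof (cases "lam i \<le> mu")
      case True
      have "(real K - 1) * a i {i} \<le> (real K - 1) * lam i"
        using al K1 by (intro mult_left_mono) auto
      thus ?thesis using True by (simp add: algebra_simps)
    next
      case False
      have "(real K - 1) * a i {i} \<le> (real K - 1) * mu"
        using am K1 by (intro mult_left_mono) auto
      thus ?thesis using False by (simp add: algebra_simps)
    qed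
  qed
  thus ?thesis using T1 T2 by simp
qed

end
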